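(* Let $\Omega_{AB}$ be a joint state space with $\Omega_A\otimes_{\min}\Omega_B\subseteq\Omega_{AB}\subseteq\Omega_A\otimes_{\max}\Omega_B$. Consider a dense coding protocol with initial state $\phi\in\Omega_{AB}$, message distribution $p_x$ and allowed local transformations $T_x$ on $A$, in which Bob's decoding measurement has effects of the form $$E_{y_1,y_2}=\sum_z q_z\, e^{(z)}_{y_1}\otimes f^{(z)}_{y_2},$$ where $\{q_z\}$ is a probability distribution and, for each $z$, $\{e^{(z)}_{y_1}\}_{y_1}\subset\mathcal E_A$ with $\sum_{y_1}e^{(z)}_{y_1}=u_A$ and $\{f^{(z)}_{y_2}\}_{y_2}\subset\mathcal E_B$ with $\sum_{y_2}f^{(z)}_{y_2}=u_B$. Then the mutual information between the message $X$ and the outcome pair $(Y_1,Y_2)$ satisfies $I(X:Y_1Y_2)\le\chi_C(\Omega_A)$. In particular no such protocol achieves superdense coding.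
   Context: Single systems: $\Omega_A\subset\mathbb R^{n_A+1}$, $\Omega_B\subset\mathbb R^{n_B+1}$ are GPT state spaces of the form $\{(1,r)^{\mathrm t}: r\in\mathcal R\}$ with $\mathcal R$ compact convex, unit effects $u_A,u_B=(1,\mathbf 0)^{\mathrm t}$, effect sets $\mathcal E_A=\{e:0\le e\cdot\omega\le1\ \forall\omega\in\Omega_A\}$ (similarly $\mathcal E_B$). Bipartite states are real $(n_A+1)\times(n_B+1)$ matrices, identified with $\mathbb R^{n_A+1}\otimes\mathbb R^{n_B+1}$ via $v\otimes w=vw^{\mathrm t}$, inner product $X\cdot Y=\mathrm{Tr}(X^{\mathrm t}Y)$. $\Omega_A\otimes_{\min}\Omega_B$ is the convex hull of product states $\omega_A\otimes\omega_B$; $\Omega_A\otimes_{\max}\Omega_B=\{\phi:(u_A\otimes u_B)\cdot\phi=1,\ (e\otimes f)\cdot\phi\ge0\ \forall e\in\mathcal E_A,f\in\mathcal E_B\}$. $\Omega_{AB}$ is closed and convex; $\mathcal E_{AB}=\{E:0\le E\cdot\phi\le1\ \forall\phi\in\Omega_{AB}\}$. An allowed local transformation on $A$ is a linear map $T$ with $T\Omega_A\subseteq\Omega_A$ and $T\phi\in\Omega_{AB}$ for all $\phi\in\Omega_{AB}$. In the dense coding protocol, outcome probabilities are $p(y_1,y_2|x)=E_{y_1,y_2}\cdot(T_x\phi)$. Classical capacity $\chi_C(\Omega_A)$: supremum of $I(X:Y)$ over finite message distributions, states $\omega_x\in\Omega_A$ and measurements $\{e_y\}\subset\mathcal E_A$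 ($\sum_y e_y=u_A$) with $p(y|x)=e_y\cdot\omega_x$. Superdense coding means $I(X:Y)>\chi_C(\Omega_A)$. *)

theory Defs
  imports "HOL-Analysis.Analysis"
begin

text \<open>Single-system vectors live in real^'a, where the distinguished index a0 :: 'a
  plays the role of the first (normalisation) coordinate.  Bipartite objects are
  matrices real^'b^'a (rows indexed by A), with v \<otimes> w = v w^t and the
  Frobenius inner product Tr(X^t Y), which is the inner product on real^'b^'a.\<close>

definition unit_eff :: "'a::finite \<Rightarrow> real^'a" where
  "unit_eff a0 = axis a0 1"

definition state_space :: "'a::finite \<Rightarrow> (real^'a) set \<Rightarrow> bool" where
  "state_space a0 \<Omega> \<longleftrightarrow> compact \<Omega> \<and> convex \<Omega> \<and> (\<forall>\<omega>\<in>\<Omega>. \<omega> $ a0 = 1)"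

definition effects :: "(real^'a::finite) set \<Rightarrow> (real^'a) set" where
  "effects \<Omega> = {e. \<forall>\<omega>\<in>\<Omega>. 0 \<le> e \<bullet> \<omega> \<and> e \<bullet> \<omega> \<le> 1}"

definition tens :: "real^'a::finite \<Rightarrow> real^'b::finite \<Rightarrow> real^'b^'a" where
  "tens v w = (\<chi> i j. v $ i * w $ j)"

definition min_tensor :: "(real^'a::finite) set \<Rightarrow> (real^'b::finite) set \<Rightarrow> (real^'b^'a) set" where
  "min_tensor \<Omega>A \<Omega>B = convex hull {tens \<omega>A \<omega>B | \<omega>A \<omega>B. \<omega>A \<in> \<Omega>A \<and> \<omega>B \<in> \<Omega>B}"

definition max_tensor :: "'a::finite \<Rightarrow> 'b::finite \<Rightarrow> (real^'a) set \<Rightarrow> (real^'b) set \<Rightarrow> (real^'b^'a) set" where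
  "max_tensor a0 b0 \<Omega>A \<Omega>B = {\<phi>. tens (unit_eff a0) (unit_eff b0) \<bullet> \<phi> = 1 \<and>
      (\<forall>e\<in>effects \<Omega>A. \<forall>f\<in>effects \<Omega>B. tens e f \<bullet> \<phi> \<ge> 0)}"

definition allowed_local_A :: "(real^'a::finite) set \<Rightarrow> (real^'b::finite^'a) set \<Rightarrow> real^'a^'a \<Rightarrow> bool" where
  "allowed_local_A \<Omega>A \<Omega>AB T \<longleftrightarrow> (\<forall>\<omega>\<in>\<Omega>A. T *v \<omega> \<in> \<Omega>A) \<and> (\<forall>\<phi>\<in>\<Omega>AB. T ** \<phi> \<in> \<Omega>AB)"

definition prob_dist :: "'x set \<Rightarrow> ('x \<Rightarrow> real) \<Rightarrow> bool" where
  "prob_dist X p \<longleftrightarrow> finite X \<and> (\<forall>x\<in>X. 0 \<le> p x) \<and> (\<Sum>x\<in>X. p x) = 1"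

definition mutual_info :: "'x set \<Rightarrow> 'y set \<Rightarrow> ('x \<Rightarrow> real) \<Rightarrow> ('x \<Rightarrow> 'y \<Rightarrow> real) \<Rightarrow> real" where
  "mutual_info X Y p P = (\<Sum>x\<in>X. \<Sum>y\<in>Y.
     (if p x * P x y = 0 then 0
      else p x * P x y * log 2 (P x y / (\<Sum>x'\<in>X. p x' * P x' y))))"

definition classical_capacity :: "'a::finite \<Rightarrow> (real^'a) set \<Rightarrow> ereal" where
  "classical_capacity a0 \<Omega> = Sup {ereal (mutual_info X Y p (\<lambda>x y. e y \<bullet> \<omega> x)) |
      (X :: nat set) (Y :: nat set) p \<omega> e.
      prob_dist X p \<and> finite Y \<and> (\<forall>x\<in>X. \<omega> x \<in> \<Omega>) \<and> (\<forall>y\<in>Y. e y \<in> effects \<Omega>) \<and>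
      (\<Sum>y\<in>Y. e y) = unit_eff a0}"

end

theory Submission
  imports Defs
begin

definition FF :: "real \<Rightarrow> real \<Rightarrow> real" where
  "FF a b = (if a = 0 then 0 else a * log 2 (a / b))"

lemma key_pt:
  fixes a b A B :: real
  assumes "a > 0" "b > 0" "A > 0" "B > 0"
  shows "a * log 2 (A/B) \<le> a * log 2 (a/b) + (A*b/B - a)/ln 2"
proof -
  have "log 2 (A/B) - log 2 (a/b) = ln (A*b/(B*a)) / ln 2"
    using assms by (simp add: log_def ln_div ln_mult field_simps)
  also have "\<dots> \<le> (A*b/(B*a) - 1) / ln 2"
    using assms by (intro divide_right_mono ln_le_minus_one) auto
  finally have "a * (log 2 (A/B) - log 2 (a/b)) \<le> a * ((A*b/(B*a) - 1) / ln 2)"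
    using assms by (intro mult_left_mono) auto
  also have "\<dots> = (A*b/B - a)/ln 2" using assms by (simp add: field_simps)
  finally show ?thesis by (simp add: algebra_simps)
qed

lemma logsum:
  assumes K: "finite K" and a: "\<And>k. k \<in> K \<Longrightarrow> 0 \<le> a k" and b: "\<And>k. k \<in> K \<Longrightarrow> 0 \<le> b k"
    and ab: "\<And>k. k \<in> K \<Longrightarrow> a k > 0 \<Longrightarrow> b k > 0"
  shows "FF (\<Sum>k\<in>K. a k) (\<Sum>k\<in>K. b k) \<le> (\<Sum>k\<in>K. FF (a k) (b k))"
proof -
  define Kp where "Kp = {k\<in>K. a k > 0}"
  have fKp: "finite Kp" using K by (simp add: Kp_def)
  have Aeq: "(\<Sum>k\<in>K. a k) = (\<Sum>k\<in>Kp. a k)"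
    unfolding Kp_def using K a by (intro sum.mono_neutral_right) (auto, force)
  have Feq: "(\<Sum>k\<in>K. FF (a k) (b k)) = (\<Sum>k\<in>Kp. FF (a k) (b k))"
    unfolding Kp_def using K a by (intro sum.mono_neutral_right) (auto simp: FF_def, force)
  have Bp: "(\<Sum>k\<in>Kp. b k) \<le> (\<Sum>k\<in>K. b k)"
    unfolding Kp_def using K b by (intro sum_mono2) auto
  show ?thesis
  proof (cases "Kp = {}")
    case True
    then show ?thesis using Aeq Feq by (simp add: FF_def)
  next
    case False
    define A where "A = (\<Sum>k\<in>Kp. a k)"
    define B where "B = (\<Sum>k\<in>K. b k)"
    define Bp where "Bp = (\<Sum>k\<in>Kp. b k)"
    have Apos: "A > 0" unfolding A_def using fKp False by (intro sum_pos) (auto simp: Kp_def)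
    have Bppos: "Bp > 0" unfolding Bp_def using fKp False ab by (intro sum_pos) (auto simp: Kp_def)
    have Bpos: "B > 0" using Bp Bppos unfolding B_def Bp_def by linarith
    have "A * log 2 (A/B) = (\<Sum>k\<in>Kp. a k * log 2 (A/B))" unfolding A_def by (simp add: sum_distrib_right)
    also have "\<dots> \<le> (\<Sum>k\<in>Kp. a k * log 2 (a k / b k) + (A * b k / B - a k) / ln 2)"
      using Apos Bpos ab by (intro sum_mono key_pt) (auto simp: Kp_def)
    also have "\<dots> = (\<Sum>k\<in>Kp. FF (a k) (b k)) + (A * Bp / B - A) / ln 2"
    proof -
      have "(\<Sum>k\<in>Kp. a k * log 2 (a k / b k) + (A * b k / B - a k) / ln 2)
        = (\<Sum>k\<in>Kp. a k * log 2 (a k / b k)) + (\<Sum>k\<in>Kp. (A * b k / B - a k)) / ln 2"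
        by (simp add: sum.distrib sum_divide_distrib)
      also have "(\<Sum>k\<in>Kp. (A * b k / B - a k)) = A * Bp / B - A"
        unfolding Bp_def A_def by (simp add: sum_subtractf sum_divide_distrib[symmetric] sum_distrib_left)
      also have "(\<Sum>k\<in>Kp. a k * log 2 (a k / b k)) = (\<Sum>k\<in>Kp. FF (a k) (b k))"
        by (intro sum.cong) (auto simp: FF_def Kp_def)
      finally show ?thesis .
    qed
    also have "\<dots> \<le> (\<Sum>k\<in>Kp. FF (a k) (b k))"
    proof -
      have "A * Bp / B \<le> A" using Apos Bpos Bp unfolding B_def Bp_def by (simp add: divide_simps)
      then show ?thesis by (simp add: divide_nonpos_pos)
    qed
    finally show ?thesis using Aeq Feq A_def B_def Apos by (simp add: FF_def)
  qed
qed

lemma FF_hom: "0 \<le> c \<Longrightarrow> FF (c * a) (c * b) = c * FF a b"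
  by (auto simp: FF_def)

lemma mi_FF: "mutual_info X Y p P = (\<Sum>x\<in>X. \<Sum>y\<in>Y. FF (p x * P x y) (p x * (\<Sum>x'\<in>X. p x' * P x' y)))"
  unfolding mutual_info_def FF_def
  by (intro sum.cong refl) (auto simp: mult_divide_mult_cancel_left)

lemma mi_hom:
  assumes "0 \<le> c"
  shows "mutual_info X Y p (\<lambda>x y. c * C x y) = c * mutual_info X Y p C"
proof -
  have "mutual_info X Y p (\<lambda>x y. c * C x y) =
     (\<Sum>x\<in>X. \<Sum>y\<in>Y. FF (c * (p x * C x y)) (c * (p x * (\<Sum>x'\<in>X. p x' * C x' y))))"
    unfolding mi_FF by (intro sum.cong refl arg_cong2[where f=FF])
      (auto simp: sum_distrib_left algebra_simps)
  also have "\<dots> = (\<Sum>x\<in>X. \<Sum>y\<in>Y. c * FF (p x * C x y) (p x * (\<Sum>x'\<in>X. p x' * C x' y)))"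
    using assms by (simp add: FF_hom)
  also have "\<dots> = c * mutual_info X Y p C"
    unfolding mi_FF by (simp add: sum_distrib_left)
  finally show ?thesis .
qed

lemma mi_subadd:
  assumes X: "finite X" and Y: "finite Y" and K: "finite K"
    and p: "\<And>x. x \<in> X \<Longrightarrow> 0 \<le> p x"
    and C: "\<And>k x y. k \<in> K \<Longrightarrow> x \<in> X \<Longrightarrow> y \<in> Y \<Longrightarrow> 0 \<le> C k x y"
  shows "mutual_info X Y p (\<lambda>x y. \<Sum>k\<in>K. C k x y) \<le> (\<Sum>k\<in>K. mutual_info X Y p (C k))"
proof -
  have "mutual_info X Y p (\<lambda>x y. \<Sum>k\<in>K. C k x y) =
    (\<Sum>x\<in>X. \<Sum>y\<in>Y. FF (\<Sum>k\<in>K. p x * C k x y) (\<Sum>k\<in>K. p x * (\<Sum>x'\<in>X. p x' * C k x' y)))"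
    unfolding mi_FF by (intro sum.cong refl arg_cong2[where f=FF])
      (auto simp: sum_distrib_left intro: sum.swap)
  also have "\<dots> \<le> (\<Sum>x\<in>X. \<Sum>y\<in>Y. \<Sum>k\<in>K. FF (p x * C k x y) (p x * (\<Sum>x'\<in>X. p x' * C k x' y)))"
  proof (intro sum_mono logsum K)
    fix x y k assume xy: "x \<in> X" "y \<in> Y" and k: "k \<in> K"
    show "0 \<le> p x * C k x y" using p C xy k by simp
    have s: "0 \<le> (\<Sum>x'\<in>X. p x' * C k x' y)" using p C xy k by (intro sum_nonneg) auto
    then show "0 \<le> p x * (\<Sum>x'\<in>X. p x' * C k x' y)" using p xy by simp
    assume pos: "0 < p x * C k x y"
    have "p x * C k x y \<le> (\<Sum>x'\<in>X. p x' * C k x' y)"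
      using p C xy k X by (intro member_le_sum) auto
    then have "0 < (\<Sum>x'\<in>X. p x' * C k x' y)" using pos by linarith
    moreover have "0 < p x" using pos p[OF xy(1)] C[OF k xy] by (simp add: zero_less_mult_iff)
    ultimately show "0 < p x * (\<Sum>x'\<in>X. p x' * C k x' y)" by simp
  qed
  also have "\<dots> = (\<Sum>k\<in>K. mutual_info X Y p (C k))"
    unfolding mi_FF by (subst sum.swap, subst (2) sum.swap) (rule refl)
  finally show ?thesis .
qed

lemma mi_restrict:
  assumes Y1: "finite Y1" and Y2: "finite Y2" and y2: "y2 \<in> Y2"
  shows "mutual_info X (Y1 \<times> Y2) p (\<lambda>x (y1, y2'). if y2' = y2 then G x y1 else 0) = mutual_info X Y1 p G"
proof -
  have "mutual_info X (Y1 \<times> Y2) p (\<lambda>x (y1, y2'). if y2' = y2 then G x y1 else 0)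
    = (\<Sum>x\<in>X. \<Sum>y1\<in>Y1. \<Sum>y2'\<in>Y2. if y2' = y2 then FF (p x * G x y1) (p x * (\<Sum>x'\<in>X. p x' * G x' y1)) else 0)"
    unfolding mi_FF
  proof (intro sum.cong refl)
    fix x assume "x \<in> X"
    show "(\<Sum>y\<in>Y1 \<times> Y2. FF (p x * (case y of (y1, y2') \<Rightarrow> if y2' = y2 then G x y1 else 0))
            (p x * (\<Sum>x'\<in>X. p x' * (case y of (y1, y2') \<Rightarrow> if y2' = y2 then G x' y1 else 0)))) =
      (\<Sum>y1\<in>Y1. \<Sum>y2'\<in>Y2. if y2' = y2 then FF (p x * G x y1) (p x * (\<Sum>x'\<in>X. p x' * G x' y1)) else 0)"
      unfolding sum.cartesian_product
      by (intro sum.cong refl) (auto simp: FF_def)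
  qed
  also have "\<dots> = mutual_info X Y1 p G"
    unfolding mi_FF using Y2 y2 by simp
  finally show ?thesis .
qed

lemma mi_reindex:
  assumes g: "bij_betw g X' X" and h: "bij_betw h Y' Y"
  shows "mutual_info X' Y' (\<lambda>n. p (g n)) (\<lambda>n m. P (g n) (h m)) = mutual_info X Y p P"
proof -
  have inner: "(\<Sum>x'\<in>X'. p (g x') * P (g x') y) = (\<Sum>x'\<in>X. p x' * P x' y)" for y
    using sum.reindex_bij_betw[OF g, of "\<lambda>x'. p x' * P x' y"] by simp
  define t where "t x y = (if p x * P x y = 0 then 0
      else p x * P x y * log 2 (P x y / (\<Sum>x'\<in>X. p x' * P x' y)))" for x y
  have "mutual_info X' Y' (\<lambda>n. p (g n)) (\<lambda>n m. P (g n) (h m)) = (\<Sum>n\<in>X'. \<Sum>m\<in>Y'. t (g n) (h m))"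
    unfolding mutual_info_def t_def inner by simp
  also have "\<dots> = (\<Sum>n\<in>X'. \<Sum>y\<in>Y. t (g n) y)"
    by (intro sum.cong refl sum.reindex_bij_betw[OF h])
  also have "\<dots> = (\<Sum>x\<in>X. \<Sum>y\<in>Y. t x y)"
    by (rule sum.reindex_bij_betw[OF g])
  also have "\<dots> = mutual_info X Y p P" unfolding mutual_info_def t_def by simp
  finally show ?thesis .
qed

lemma cap_bound:
  fixes X :: "'x set" and Y :: "'y set" and \<omega> :: "'x \<Rightarrow> real^'a::finite" and e :: "'y \<Rightarrow> real^'a"
  assumes pX: "prob_dist X p" and Y: "finite Y" and om: "\<forall>x\<in>X. \<omega> x \<in> \<Omega>"
    and ef: "\<forall>y\<in>Y. e y \<in> effects \<Omega>" and su: "(\<Sum>y\<in>Y. e y) = unit_eff a0"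
  shows "ereal (mutual_info X Y p (\<lambda>x y. e y \<bullet> \<omega> x)) \<le> classical_capacity a0 \<Omega>"
proof -
  have X: "finite X" using pX by (simp add: prob_dist_def)
  obtain g where g: "bij_betw g {0..<card X} X" using ex_bij_betw_nat_finite[OF X] by blast
  obtain h where h: "bij_betw h {0..<card Y} Y" using ex_bij_betw_nat_finite[OF Y] by blast
  have eq: "mutual_info {0..<card X} {0..<card Y} (\<lambda>n. p (g n)) (\<lambda>n m. (e \<circ> h) m \<bullet> (\<omega> \<circ> g) n)
     = mutual_info X Y p (\<lambda>x y. e y \<bullet> \<omega> x)"
    using mi_reindex[OF g h, of p "\<lambda>x y. e y \<bullet> \<omega> x"] by simp
  have "prob_dist {0..<card X} (\<lambda>n. p (g n))"
    using pX sum.reindex_bij_betw[OF g, of p] bij_betwE[OF g] unfolding prob_dist_def by auto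
  moreover have "\<forall>x\<in>{0..<card X}. (\<omega> \<circ> g) x \<in> \<Omega>" using om bij_betwE[OF g] by auto
  moreover have "\<forall>y\<in>{0..<card Y}. (e \<circ> h) y \<in> effects \<Omega>" using ef bij_betwE[OF h] by auto
  moreover have "(\<Sum>y\<in>{0..<card Y}. (e \<circ> h) y) = unit_eff a0"
    using sum.reindex_bij_betw[OF h, of e] su by simp
  ultimately have "ereal (mutual_info {0..<card X} {0..<card Y} (\<lambda>n. p (g n)) (\<lambda>n m. (e \<circ> h) m \<bullet> (\<omega> \<circ> g) n))
     \<le> classical_capacity a0 \<Omega>"
    unfolding classical_capacity_def by (intro Sup_upper) blast
  then show ?thesis using eq by simp
qed

lemma unit_inner: "unit_eff a0 \<bullet> v = v $ a0"
  by (simp add: unit_eff_def inner_axis')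

lemma unit_effect: "state_space a0 \<Omega> \<Longrightarrow> unit_eff a0 \<in> effects \<Omega>"
  by (auto simp: effects_def unit_inner state_space_def)

lemma cone_lemma:
  fixes v :: "real^'a::finite"
  assumes ss: "state_space a0 \<Omega>" and ne: "\<Omega> \<noteq> {}" and pos: "\<forall>e\<in>effects \<Omega>. 0 \<le> e \<bullet> v"
  shows "\<exists>\<omega>\<in>\<Omega>. v = (v $ a0) *\<^sub>R \<omega>"
proof (rule ccontr)
  assume nv: "\<not> ?thesis"
  define l where "l = v $ a0"
  have cpt: "compact \<Omega>" and cvx: "convex \<Omega>" and one: "\<And>\<omega>. \<omega> \<in> \<Omega> \<Longrightarrow> \<omega> $ a0 = 1"
    using ss by (auto simp: state_space_def)
  let ?S = "(\<lambda>x. l *\<^sub>R x) ` \<Omega>"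
  have "v \<notin> ?S" using nv l_def by auto
  moreover have "convex ?S" by (rule convex_scaling[OF cvx])
  moreover have "closed ?S" by (intro compact_imp_closed compact_scaling cpt)
  ultimately obtain c b where cb: "c \<bullet> v < b" "\<forall>x\<in>?S. b < c \<bullet> x"
    using separating_hyperplane_closed_point by blast
  have cont: "continuous_on \<Omega> (\<lambda>x. c \<bullet> x)" by (intro continuous_intros)
  obtain w0 where w0: "w0 \<in> \<Omega>" "\<forall>y\<in>\<Omega>. c \<bullet> w0 \<le> c \<bullet> y"
    using continuous_attains_inf[OF cpt ne cont] by blast
  obtain w1 where w1: "w1 \<in> \<Omega>" "\<forall>y\<in>\<Omega>. c \<bullet> y \<le> c \<bullet> w1"
    using continuous_attains_sup[OF cpt ne cont] by blast
  define m where "m = c \<bullet> w0"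
  define K where "K = c \<bullet> w1 - m + 1"
  have Kpos: "K > 0" using w1(2) w0(1) unfolding K_def m_def by force
  define e where "e = (1/K) *\<^sub>R (c - m *\<^sub>R unit_eff a0)"
  have einner: "e \<bullet> x = (c \<bullet> x - m * x $ a0) / K" for x
    unfolding e_def by (simp add: inner_diff_left unit_inner divide_simps)
  have "e \<in> effects \<Omega>"
    unfolding effects_def
  proof (safe)
    fix \<omega> assume "\<omega> \<in> \<Omega>"
    then have "m \<le> c \<bullet> \<omega>" "c \<bullet> \<omega> \<le> c \<bullet> w1" "\<omega> $ a0 = 1" using w0 w1 one unfolding m_def by auto
    then show "0 \<le> e \<bullet> \<omega>" "e \<bullet> \<omega> \<le> 1" using Kpos unfolding einner K_def by (auto simp: divide_simps)
  qed
  then have "0 \<le> e \<bullet> v" using pos by blast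
  moreover have "b < c \<bullet> (l *\<^sub>R w0)" using cb(2) w0(1) by blast
  then have "c \<bullet> v < l * m" using cb(1) unfolding m_def by simp
  ultimately show False using Kpos unfolding einner l_def by (simp add: divide_simps mult.commute)
qed

lemma tens_inner: "tens e f \<bullet> M = e \<bullet> (M *v f)"
  by (simp add: tens_def inner_vec_def matrix_vector_mult_def sum_distrib_left mult_ac)

lemma tens_sum_right: "finite Y \<Longrightarrow> tens e (\<Sum>y\<in>Y. f y) = (\<Sum>y\<in>Y. tens e (f y))"
  by (simp add: tens_def vec_eq_iff sum_component sum_distrib_left)

lemma mi_cong:
  assumes "\<And>x y. x \<in> X \<Longrightarrow> y \<in> Y \<Longrightarrow> P x y = P' x y"
  shows "mutual_info X Y p P = mutual_info X Y p P'"
proof -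
  have "\<And>y. y \<in> Y \<Longrightarrow> (\<Sum>x'\<in>X. p x' * P x' y) = (\<Sum>x'\<in>X. p x' * P' x' y)"
    using assms by (intro sum.cong) auto
  then show ?thesis unfolding mutual_info_def using assms by (intro sum.cong refl) auto
qed

theorem proposition5:
  fixes a0 :: "'a::finite" and b0 :: "'b::finite"
    and \<Omega>A :: "(real^'a) set" and \<Omega>B :: "(real^'b) set" and \<Omega>AB :: "(real^'b^'a) set"
    and \<phi> :: "real^'b^'a"
    and X :: "'x set" and p :: "'x \<Rightarrow> real" and T :: "'x \<Rightarrow> real^'a^'a"
    and Z :: "'z set" and q :: "'z \<Rightarrow> real"
    and Y1 :: "'y1 set" and Y2 :: "'y2 set"
    and e :: "'z \<Rightarrow> 'y1 \<Rightarrow> real^'a" and f :: "'z \<Rightarrow> 'y2 \<Rightarrow> real^'b"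
  assumes "state_space a0 \<Omega>A" and "state_space b0 \<Omega>B"
    and "closed \<Omega>AB" and "convex \<Omega>AB"
    and "min_tensor \<Omega>A \<Omega>B \<subseteq> \<Omega>AB" and "\<Omega>AB \<subseteq> max_tensor a0 b0 \<Omega>A \<Omega>B"
    and "\<phi> \<in> \<Omega>AB"
    and "prob_dist X p"
    and "\<forall>x\<in>X. allowed_local_A \<Omega>A \<Omega>AB (T x)"
    and "prob_dist Z q"
    and "finite Y1" and "finite Y2"
    and "\<forall>z\<in>Z. (\<forall>y1\<in>Y1. e z y1 \<in> effects \<Omega>A) \<and> (\<Sum>y1\<in>Y1. e z y1) = unit_eff a0"
    and "\<forall>z\<in>Z. (\<forall>y2\<in>Y2. f z y2 \<in> effects \<Omega>B) \<and> (\<Sum>y2\<in>Y2. f z y2) = unit_eff b0"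
  shows "ereal (mutual_info X (Y1 \<times> Y2) p
            (\<lambda>x (y1, y2). (\<Sum>z\<in>Z. q z *\<^sub>R tens (e z y1) (f z y2)) \<bullet> (T x ** \<phi>)))
         \<le> classical_capacity a0 \<Omega>A"
proof -
  note ssA = assms(1) and ssB = assms(2) and maxt = assms(6) and phi = assms(7) and pX = assms(8)
    and TT = assms(9) and qZ = assms(10) and Y1 = assms(11) and Y2 = assms(12) and eZ = assms(13) and fZ = assms(14)
  have X: "finite X" and p0: "\<And>x. x \<in> X \<Longrightarrow> 0 \<le> p x" using pX by (auto simp: prob_dist_def)
  have Z: "finite Z" and q0: "\<And>z. z \<in> Z \<Longrightarrow> 0 \<le> q z" and q1: "(\<Sum>z\<in>Z. q z) = 1"
    using qZ by (auto simp: prob_dist_def)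
  have pos: "0 \<le> tens e' f' \<bullet> \<psi>" if "e' \<in> effects \<Omega>A" "f' \<in> effects \<Omega>B" "\<psi> \<in> \<Omega>AB" for e' f' \<psi>
    using that maxt unfolding max_tensor_def by auto
  have norm: "tens (unit_eff a0) (unit_eff b0) \<bullet> \<phi> = 1" using phi maxt unfolding max_tensor_def by auto
  have neA: "\<Omega>A \<noteq> {}"
  proof
    assume "\<Omega>A = {}"
    then have "- unit_eff a0 \<in> effects \<Omega>A" "unit_eff a0 \<in> effects \<Omega>A" by (auto simp: effects_def)
    then have "0 \<le> tens (- unit_eff a0) (unit_eff b0) \<bullet> \<phi>" "0 \<le> tens (unit_eff a0) (unit_eff b0) \<bullet> \<phi>"
      using pos unit_effect[OF ssB] phi by auto
    then show False using norm by (simp add: tens_inner)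
  qed
  define v where "v z y2 = \<phi> *v f z y2" for z y2
  define l where "l z y2 = v z y2 $ a0" for z y2
  have vpos: "\<forall>e'\<in>effects \<Omega>A. 0 \<le> e' \<bullet> v z y2" if "z \<in> Z" "y2 \<in> Y2" for z y2
    using pos[of _ "f z y2" \<phi>] fZ that phi unfolding v_def by (auto simp: tens_inner)
  define \<omega> where "\<omega> z y2 = (SOME w. w \<in> \<Omega>A \<and> v z y2 = l z y2 *\<^sub>R w)" for z y2
  have om: "\<omega> z y2 \<in> \<Omega>A \<and> v z y2 = l z y2 *\<^sub>R \<omega> z y2" if "z \<in> Z" "y2 \<in> Y2" for z y2
    unfolding \<omega>_def l_def using cone_lemma[OF ssA neA vpos[OF that]] by (intro someI_ex[where P="\<lambda>w. w \<in> \<Omega>A \<and> v z y2 = v z y2 $ a0 *\<^sub>R w"]) blast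
  have l0: "0 \<le> l z y2" if "z \<in> Z" "y2 \<in> Y2" for z y2
    using vpos[OF that] unit_effect[OF ssA] unfolding l_def by (auto simp: unit_inner)
  have lsum: "(\<Sum>y2\<in>Y2. l z y2) = 1" if "z \<in> Z" for z
  proof -
    have "(\<Sum>y2\<in>Y2. l z y2) = (\<Sum>y2\<in>Y2. tens (unit_eff a0) (f z y2) \<bullet> \<phi>)"
      unfolding l_def v_def by (simp add: tens_inner unit_inner)
    also have "\<dots> = tens (unit_eff a0) (\<Sum>y2\<in>Y2. f z y2) \<bullet> \<phi>"
      using Y2 by (simp add: tens_sum_right inner_sum_left)
    also have "\<dots> = 1" using fZ that norm by simp
    finally show ?thesis .
  qed
  define C where "C = (\<lambda>(z, y2) x (y1, y2'). if y2' = y2 then e z y1 \<bullet> (T x *v \<omega> z y2) else (0::real))"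
  define w where "w = (\<lambda>(z, y2). q z * l z y2)"
  have Tom: "T x *v \<omega> z y2 \<in> \<Omega>A" if "x \<in> X" "z \<in> Z" "y2 \<in> Y2" for x z y2
    using TT om that unfolding allowed_local_A_def by blast
  have effA: "0 \<le> e' \<bullet> s" if "e' \<in> effects \<Omega>A" "s \<in> \<Omega>A" for e' s
    using that unfolding effects_def by auto
  have C0: "0 \<le> C k x y" if "k \<in> Z \<times> Y2" "x \<in> X" "y \<in> Y1 \<times> Y2" for k x y
    using that Tom eZ effA unfolding C_def by (auto split: prod.splits)
  have w0: "0 \<le> w k" if "k \<in> Z \<times> Y2" for k
    using that q0 l0 unfolding w_def by (auto split: prod.splits)
  have wsum: "(\<Sum>k\<in>Z \<times> Y2. w k) = 1"
  proof -
    have "(\<Sum>k\<in>Z \<times> Y2. w k) = (\<Sum>z\<in>Z. q z * (\<Sum>y2\<in>Y2. l z y2))"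
      unfolding w_def sum.cartesian_product[symmetric] by (simp add: sum_distrib_left)
    also have "\<dots> = (\<Sum>z\<in>Z. q z)" using lsum by simp
    finally show ?thesis using q1 by simp
  qed
  have Peq: "(case y of (y1, y2) \<Rightarrow> (\<Sum>z\<in>Z. q z *\<^sub>R tens (e z y1) (f z y2)) \<bullet> (T x ** \<phi>))
      = (\<Sum>k\<in>Z \<times> Y2. w k * C k x y)" if xX: "x \<in> X" and yY: "y \<in> Y1 \<times> Y2" for x y
  proof -
    obtain y1 y2 where y: "y = (y1, y2)" "y1 \<in> Y1" "y2 \<in> Y2" using yY by auto
    have "(\<Sum>z\<in>Z. q z *\<^sub>R tens (e z y1) (f z y2)) \<bullet> (T x ** \<phi>)
        = (\<Sum>z\<in>Z. q z * (e z y1 \<bullet> (T x *v v z y2)))"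
      unfolding v_def by (simp add: inner_sum_left tens_inner matrix_vector_mul_assoc)
    also have "\<dots> = (\<Sum>z\<in>Z. q z * l z y2 * (e z y1 \<bullet> (T x *v \<omega> z y2)))"
      using om y(3) by (intro sum.cong refl) (simp add: matrix_vector_mult_scaleR)
    also have "\<dots> = (\<Sum>z\<in>Z. \<Sum>y2'\<in>Y2. w (z, y2') * C (z, y2') x (y1, y2))"
      using y(3) Y2 unfolding w_def C_def by (simp add: if_distrib cong: if_cong)
    also have "\<dots> = (\<Sum>k\<in>Z \<times> Y2. w k * C k x y)"
      unfolding y(1) sum.cartesian_product by (simp add: case_prod_beta')
    finally show ?thesis using y(1) by simp
  qed
  have Ck: "ereal (mutual_info X (Y1 \<times> Y2) p (C k)) \<le> classical_capacity a0 \<Omega>A" if kK: "k \<in> Z \<times> Y2" for k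
  proof -
    obtain z y2 where k: "k = (z, y2)" "z \<in> Z" "y2 \<in> Y2" using kK by auto
    have "mutual_info X (Y1 \<times> Y2) p (C k) =
        mutual_info X (Y1 \<times> Y2) p (\<lambda>x (y1, y2'). if y2' = y2 then e z y1 \<bullet> (T x *v \<omega> z y2) else 0)"
      unfolding k C_def by simp
    also have "\<dots> = mutual_info X Y1 p (\<lambda>x y1. e z y1 \<bullet> (T x *v \<omega> z y2))"
      by (rule mi_restrict[OF Y1 Y2 k(3)])
    finally show ?thesis
      using cap_bound[OF pX Y1, of "\<lambda>x. T x *v \<omega> z y2" \<Omega>A "e z" a0] Tom eZ k by auto
  qed
  have main: "mutual_info X (Y1 \<times> Y2) p
            (\<lambda>x (y1, y2). (\<Sum>z\<in>Z. q z *\<^sub>R tens (e z y1) (f z y2)) \<bullet> (T x ** \<phi>))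
      \<le> (\<Sum>k\<in>Z \<times> Y2. w k * mutual_info X (Y1 \<times> Y2) p (C k))"
  proof -
    have "mutual_info X (Y1 \<times> Y2) p
            (\<lambda>x (y1, y2). (\<Sum>z\<in>Z. q z *\<^sub>R tens (e z y1) (f z y2)) \<bullet> (T x ** \<phi>))
       = mutual_info X (Y1 \<times> Y2) p (\<lambda>x y. \<Sum>k\<in>Z \<times> Y2. w k * C k x y)"
      by (rule mi_cong) (simp add: Peq)
    also have "\<dots> \<le> (\<Sum>k\<in>Z \<times> Y2. mutual_info X (Y1 \<times> Y2) p (\<lambda>x y. w k * C k x y))"
      using X Y1 Y2 Z p0 C0 w0 by (intro mi_subadd) auto
    also have "\<dots> = (\<Sum>k\<in>Z \<times> Y2. w k * mutual_info X (Y1 \<times> Y2) p (C k))"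
      using w0 by (intro sum.cong refl mi_hom) auto
    finally show ?thesis .
  qed
  have Zne: "Z \<noteq> {}" using q1 by auto
  then obtain z0 where z0: "z0 \<in> Z" by auto
  have "Y2 \<noteq> {}"
  proof
    assume "Y2 = {}"
    then have "unit_eff b0 = 0" using fZ z0 by force
    then show False unfolding unit_eff_def by (simp add: axis_eq_0_iff)
  qed
  then obtain k0 where k0: "k0 \<in> Z \<times> Y2" using z0 by auto
  show ?thesis
  proof (cases "classical_capacity a0 \<Omega>A")
    case (real c)
    have "(\<Sum>k\<in>Z \<times> Y2. w k * mutual_info X (Y1 \<times> Y2) p (C k)) \<le> (\<Sum>k\<in>Z \<times> Y2. w k * c)"
      using Ck w0 real by (intro sum_mono mult_left_mono) auto
    also have "\<dots> = c" using wsum by (simp add: sum_distrib_right[symmetric])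
    finally show ?thesis using main real by simp
  next
    case PInf then show ?thesis by simp
  next
    case MInf then show ?thesis using Ck[OF k0] by simp
  qed
qed

end
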